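(* Let $S=K[x_1,\ldots,x_n]$ and let $I$ be a square-free monomial ideal of $S$ of degree $2$. Then $I$ is an $f$-ideal which is not of $l$ type for any $l$ if and only if the graph $T=\overline{\tau(G(I))}$ satisfies all of: (1) for each $i\in[n]$, $d(v_i)<n-1$ in $T$; (2) $\omega(T)=2$; (3) $|E(T)|=\frac12 C_n^2$; (4) $T$ is not bipartite.
   Context: $K$ is a field; $G(I)$ is the minimal monomial generating set; "of degree 2" means all elements of $G(I)$ have degree 2. With $\sigma$ the bijection $x_{i_1}\cdots x_{i_k}\mapsto\{i_1,\ldots,i_k\}$, the facet complex $\delta_{\mathcal{F}}(I)$ has facets $\sigma(g)$, $g\in G(I)$, the Stanley–Reisner complex is $\delta_{\mathcal{N}}(I)=\{\sigma(g)\mid g \text{ square-free monomial},\ g\notin I\}$, and $I$ is an $f$-ideal if both have the same $f$-vector. For a nonempty proper $B\subset[n]$ with complement $\overline B$, $W_B=\{x_ix_j\mid i\ne j,\ i,j\in B \text{ or } i,j\in\overline B\}$; $I$ is of $l$ type if $W_B\subseteq G(I)$ for some $B$ with $|B|=l$. $\tau(A)$, for a set $A$ of degree-2 square-free monomials, is the graph on $v_1,\ldots,v_n$ with edge $v_iv_j$ iff $x_ix_j\in A$; $\overline{\tau(A)}$ is its complement graph, $d(v)$ is vertex degree, $\omega$ is clique number, $E(T)$ is the edge set, $C_n^2$ the binomial coefficient. *)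

theory Defs
  imports Complex_Main
begin

text \<open>A square-free monomial x_{i_1}...x_{i_k} of S = K[x_1,...,x_n]
  is identified with its support sigma(g) = {i_1,...,i_k}, a subset of {1..n}.
  A square-free monomial ideal I of degree 2 is determined by its minimal generating set G(I),
  encoded as the set  Gs = sigma ` G(I)  of 2-element subsets of {1..n}.
  A square-free monomial g lies in I iff some generator divides g, i.e. some element of Gs
  is contained in sigma(g).  The field K plays no role.\<close>

definition sqfree_deg2_gens :: "nat \<Rightarrow> nat set set \<Rightarrow> bool" where
  "sqfree_deg2_gens n Gs \<longleftrightarrow> (\<forall>g\<in>Gs. g \<subseteq> {1..n} \<and> card g = 2)"

definition in_ideal :: "nat set set \<Rightarrow> nat set \<Rightarrow> bool" where
  "in_ideal Gs F \<longleftrightarrow> (\<exists>g\<in>Gs. g \<subseteq> F)"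

definition facet_complex :: "nat set set \<Rightarrow> nat set set" where
  "facet_complex Gs = {F. \<exists>g\<in>Gs. F \<subseteq> g}"

definition SR_complex :: "nat \<Rightarrow> nat set set \<Rightarrow> nat set set" where
  "SR_complex n Gs = {F. F \<subseteq> {1..n} \<and> \<not> in_ideal Gs F}"

text \<open>f-vector: f_i = number of faces of dimension i (i.e. of cardinality i+1).\<close>
definition f_vector :: "nat set set \<Rightarrow> nat \<Rightarrow> nat" where
  "f_vector D i = card {F \<in> D. card F = i + 1}"

definition f_ideal :: "nat \<Rightarrow> nat set set \<Rightarrow> bool" where
  "f_ideal n Gs \<longleftrightarrow> f_vector (facet_complex Gs) = f_vector (SR_complex n Gs)"

definition W_set :: "nat \<Rightarrow> nat set \<Rightarrow> nat set set" where
  "W_set n B = {{i, j} | i j. i \<noteq> j \<and>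
      ((i \<in> B \<and> j \<in> B) \<or> (i \<in> {1..n} - B \<and> j \<in> {1..n} - B))}"

definition of_l_type :: "nat \<Rightarrow> nat set set \<Rightarrow> nat \<Rightarrow> bool" where
  "of_l_type n Gs l \<longleftrightarrow>
     (\<exists>B. B \<noteq> {} \<and> B \<subset> {1..n} \<and> card B = l \<and> W_set n B \<subseteq> Gs)"

text \<open>Simple graphs on vertex set V, edges are 2-element subsets of V.
  tau(G(I)) has edge {i,j} iff x_i x_j in G(I); its complement graph T has vertex set {1..n}
  and edge set the 2-subsets of {1..n} not in Gs.\<close>
definition compl_tau_edges :: "nat \<Rightarrow> nat set set \<Rightarrow> nat set set" where
  "compl_tau_edges n Gs = {e. e \<subseteq> {1..n} \<and> card e = 2 \<and> e \<notin> Gs}"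

definition vdegree :: "nat set \<Rightarrow> nat set set \<Rightarrow> nat \<Rightarrow> nat" where
  "vdegree V E v = card {u \<in> V. {v, u} \<in> E}"

definition is_clique :: "nat set \<Rightarrow> nat set set \<Rightarrow> nat set \<Rightarrow> bool" where
  "is_clique V E C \<longleftrightarrow> C \<subseteq> V \<and> (\<forall>u\<in>C. \<forall>w\<in>C. u \<noteq> w \<longrightarrow> {u, w} \<in> E)"

definition clique_number :: "nat set \<Rightarrow> nat set set \<Rightarrow> nat" where
  "clique_number V E = Max (card ` {C. is_clique V E C})"

definition bipartite :: "nat set \<Rightarrow> nat set set \<Rightarrow> bool" where
  "bipartite V E \<longleftrightarrow> (\<exists>A B. A \<union> B = V \<and> A \<inter> B = {} \<and>
      (\<forall>e\<in>E. \<exists>a\<in>A. \<exists>b\<in>B. e = {a, b}))"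

end

theory Submission
  imports Defs
begin

locale L =
  fixes n :: nat and Gs :: "nat set set"
  assumes sq: "sqfree_deg2_gens n Gs" and ne: "Gs \<noteq> {}"
begin

abbreviation "E \<equiv> compl_tau_edges n Gs"

lemma gen2: "g \<in> Gs \<Longrightarrow> \<exists>a b. g = {a,b} \<and> a \<noteq> b \<and> a \<in> {1..n} \<and> b \<in> {1..n}"
proof -
  assume "g \<in> Gs"
  then have "g \<subseteq> {1..n}" "card g = 2" using sq by (auto simp: sqfree_deg2_gens_def)
  then obtain a b where "g={a,b}" "a\<noteq>b" by (auto simp: card_2_iff)
  with \<open>g \<subseteq> {1..n}\<close> show ?thesis by blast
qed

lemma gsub: "\<Union>Gs \<subseteq> {1..n}" using sq by (auto simp: sqfree_deg2_gens_def)

lemma fin_gs: "finite Gs"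
proof -
  have "Gs \<subseteq> Pow {1..n}" using sq by (auto simp: sqfree_deg2_gens_def)
  then show ?thesis by (meson finite_Pow_iff finite_atLeastAtMost finite_subset)
qed

lemma fin_E: "finite E"
proof -
  have "E \<subseteq> Pow {1..n}" by (auto simp: compl_tau_edges_def)
  then show ?thesis by (meson finite_Pow_iff finite_atLeastAtMost finite_subset)
qed

lemma card_sum: "card Gs + card E = n choose 2"
proof -
  have "Gs \<union> E = {B. B \<subseteq> {1..n} \<and> card B = 2}"
    using sq by (auto simp: sqfree_deg2_gens_def compl_tau_edges_def)
  moreover have "Gs \<inter> E = {}" by (auto simp: compl_tau_edges_def)
  ultimately show ?thesis using fin_gs fin_E
    by (metis card_Un_disjoint card_atLeastAtMost diff_Suc_1 n_subsets finite_atLeastAtMost)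
qed

lemma fv_facet0: "f_vector (facet_complex Gs) 0 = card (\<Union>Gs)"
proof -
  have "{F \<in> facet_complex Gs. card F = 0 + 1} = (\<lambda>x. {x}) ` (\<Union>Gs)"
    by (auto simp: facet_complex_def card_Suc_eq)
  then show ?thesis unfolding f_vector_def by (simp add: card_image)
qed

lemma fv_facet1: "f_vector (facet_complex Gs) 1 = card Gs"
proof -
  have "{F \<in> facet_complex Gs. card F = 1 + 1} = Gs"
  proof safe
    fix F assume "F \<in> facet_complex Gs" "card F = 1 + 1"
    then obtain g where "g \<in> Gs" "F \<subseteq> g" by (auto simp: facet_complex_def)
    with gen2[OF this(1)] \<open>card F = 1+1\<close> show "F \<in> Gs"
      by (metis card_subset_eq finite.emptyI finite.insertI one_add_one card_2_iff)
  next
    fix F assume "F \<in> Gs" then show "F \<in> facet_complex Gs" by (auto simp: facet_complex_def)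
    show "card F = 1 + 1" using \<open>F \<in> Gs\<close> sq by (auto simp: sqfree_deg2_gens_def)
  qed
  then show ?thesis unfolding f_vector_def by simp
qed

lemma fv_facet2: "i \<ge> 2 \<Longrightarrow> f_vector (facet_complex Gs) i = 0"
proof -
  assume i: "i \<ge> 2"
  have "{F \<in> facet_complex Gs. card F = i + 1} = {}"
  proof safe
    fix F assume "F \<in> facet_complex Gs" "card F = i + 1"
    then obtain g where "g \<in> Gs" "F \<subseteq> g" by (auto simp: facet_complex_def)
    then have "card F \<le> 2" using sq
      by (metis card_mono card.infinite sqfree_deg2_gens_def zero_neq_numeral)
    with \<open>card F = i+1\<close> i show "F \<in> {}" by simp
  qed
  then show ?thesis unfolding f_vector_def by (metis card.empty)
qed

lemma fv_SR0: "f_vector (SR_complex n Gs) 0 = n"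
proof -
  have "{F \<in> SR_complex n Gs. card F = 0 + 1} = (\<lambda>x. {x}) ` {1..n}"
  proof safe
    fix F assume "F \<in> SR_complex n Gs" "card F = 0 + 1"
    then show "F \<in> (\<lambda>x. {x}) ` {1..n}" by (auto simp: SR_complex_def card_Suc_eq)
  next
    fix x assume x: "x \<in> {1..n}"
    show "{x} \<in> SR_complex n Gs"
      unfolding SR_complex_def in_ideal_def using x gen2 by fastforce
  qed auto
  then show ?thesis unfolding f_vector_def by (simp add: card_image)
qed

lemma fv_SR1: "f_vector (SR_complex n Gs) 1 = card E"
proof -
  have "{F \<in> SR_complex n Gs. card F = 1 + 1} = E"
  proof safe
    fix F assume "F \<in> SR_complex n Gs" "card F = 1 + 1"
    then show "F \<in> E" by (auto simp: SR_complex_def in_ideal_def compl_tau_edges_def)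
  next
    fix F assume F: "F \<in> E"
    then have "F \<subseteq> {1..n}" "card F = 2" "F \<notin> Gs" by (auto simp: compl_tau_edges_def)
    moreover have "g \<subseteq> F \<Longrightarrow> g \<in> Gs \<Longrightarrow> False" for g
      using gen2[of g] calculation
      by (metis card_subset_eq card.infinite zero_neq_numeral card_2_iff finite.emptyI finite.insertI)
    ultimately show "F \<in> SR_complex n Gs" by (auto simp: SR_complex_def in_ideal_def)
    show "card F = 1 + 1" using F by (auto simp: compl_tau_edges_def)
  qed
  then show ?thesis unfolding f_vector_def by simp
qed

lemma fin_SR: "finite (SR_complex n Gs)"
proof -
  have "SR_complex n Gs \<subseteq> Pow {1..n}" by (auto simp: SR_complex_def)
  then show ?thesis by (meson finite_Pow_iff finite_atLeastAtMost finite_subset)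
qed

lemma SR_small: "(\<forall>i\<ge>2. f_vector (SR_complex n Gs) i = 0) \<longleftrightarrow> (\<forall>F\<in>SR_complex n Gs. card F \<le> 2)"
proof
  assume H: "\<forall>i\<ge>2. f_vector (SR_complex n Gs) i = 0"
  show "\<forall>F\<in>SR_complex n Gs. card F \<le> 2"
  proof (rule ccontr)
    assume "\<not> ?thesis"
    then obtain F where F: "F \<in> SR_complex n Gs" "card F > 2" by auto
    have "F \<in> {G \<in> SR_complex n Gs. card G = (card F - 1) + 1}" using F by auto
    moreover have "finite {G \<in> SR_complex n Gs. card G = (card F - 1) + 1}" using fin_SR by auto
    ultimately have "f_vector (SR_complex n Gs) (card F - 1) > 0"
      unfolding f_vector_def by (metis card_gt_0_iff empty_iff)
    with H F show False by auto
  qed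
next
  assume H: "\<forall>F\<in>SR_complex n Gs. card F \<le> 2"
  show "\<forall>i\<ge>2. f_vector (SR_complex n Gs) i = 0"
  proof safe
    fix i :: nat assume "i \<ge> 2"
    then have "{G \<in> SR_complex n Gs. card G = i + 1} = {}" using H by fastforce
    then show "f_vector (SR_complex n Gs) i = 0" unfolding f_vector_def by (metis card.empty)
  qed
qed

lemma f_ideal_iff: "f_ideal n Gs \<longleftrightarrow> \<Union>Gs = {1..n} \<and> card Gs = card E \<and> (\<forall>F\<in>SR_complex n Gs. card F \<le> 2)"
proof -
  have "f_ideal n Gs \<longleftrightarrow> (\<forall>i. f_vector (facet_complex Gs) i = f_vector (SR_complex n Gs) i)"
    unfolding f_ideal_def by auto
  also have "\<dots> \<longleftrightarrow> card (\<Union>Gs) = n \<and> card Gs = card E \<and> (\<forall>i\<ge>2. f_vector (SR_complex n Gs) i = 0)"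
  proof
    assume H: "\<forall>i. f_vector (facet_complex Gs) i = f_vector (SR_complex n Gs) i"
    show "card (\<Union>Gs) = n \<and> card Gs = card E \<and> (\<forall>i\<ge>2. f_vector (SR_complex n Gs) i = 0)"
      using H[rule_format, of 0] H[rule_format, of 1] H fv_facet0 fv_facet1 fv_facet2 fv_SR0 fv_SR1 by auto
  next
    assume H: "card (\<Union>Gs) = n \<and> card Gs = card E \<and> (\<forall>i\<ge>2. f_vector (SR_complex n Gs) i = 0)"
    show "\<forall>i. f_vector (facet_complex Gs) i = f_vector (SR_complex n Gs) i"
    proof
      fix i :: nat
      show "f_vector (facet_complex Gs) i = f_vector (SR_complex n Gs) i"
      proof (cases "i = 0")
        case True then show ?thesis using H fv_facet0 fv_SR0 by simp
      next
        case False
        show ?thesis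
        proof (cases "i = 1")
          case True then show ?thesis using H fv_facet1 fv_SR1 by simp
        next
          case F2: False
          with False have "i \<ge> 2" by simp
          then show ?thesis using H fv_facet2 by simp
        qed
      qed
    qed
  qed
  also have "card (\<Union>Gs) = n \<longleftrightarrow> \<Union>Gs = {1..n}"
    using gsub by (metis card_atLeastAtMost card_subset_eq diff_Suc_1 finite_atLeastAtMost)
  finally show ?thesis using SR_small by simp
qed

lemma clique_iff: "is_clique {1..n} E C \<longleftrightarrow> C \<in> SR_complex n Gs"
proof
  assume H: "is_clique {1..n} E C"
  then have "C \<subseteq> {1..n}" by (simp add: is_clique_def)
  moreover have "\<not> in_ideal Gs C"
  proof
    assume "in_ideal Gs C"
    then obtain g where "g \<in> Gs" "g \<subseteq> C" by (auto simp: in_ideal_def)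
    then obtain a b where "g = {a,b}" "a \<noteq> b" using gen2 by blast
    with H \<open>g \<subseteq> C\<close> have "g \<in> E" by (auto simp: is_clique_def)
    with \<open>g \<in> Gs\<close> show False by (auto simp: compl_tau_edges_def)
  qed
  ultimately show "C \<in> SR_complex n Gs" by (simp add: SR_complex_def)
next
  assume H: "C \<in> SR_complex n Gs"
  show "is_clique {1..n} E C"
    unfolding is_clique_def
  proof safe
    fix x assume "x \<in> C" then show "x \<in> {1..n}" using H by (auto simp: SR_complex_def)
  next
    fix u w assume "u \<in> C" "w \<in> C" "u \<noteq> w"
    then show "{u, w} \<in> E" using H
      by (auto simp: SR_complex_def compl_tau_edges_def in_ideal_def card_2_iff)
  qed
qed

lemma clique_num_iff: "clique_number {1..n} E = 2 \<longleftrightarrow> E \<noteq> {} \<and> (\<forall>F\<in>SR_complex n Gs. card F \<le> 2)"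
proof -
  have eq: "{C. is_clique {1..n} E C} = SR_complex n Gs" using clique_iff by auto
  have ne: "card ` SR_complex n Gs \<noteq> {}" using clique_iff[of "{}"] eq
    by (auto simp: is_clique_def)
  have "clique_number {1..n} E = 2 \<longleftrightarrow> 2 \<in> card ` SR_complex n Gs \<and> (\<forall>F\<in>SR_complex n Gs. card F \<le> 2)"
    unfolding clique_number_def eq using fin_SR ne by (simp add: Max_eq_iff)
  moreover have "2 \<in> card ` SR_complex n Gs \<longleftrightarrow> E \<noteq> {}"
  proof
    assume "2 \<in> card ` SR_complex n Gs"
    then obtain C where "C \<in> SR_complex n Gs" "card C = 2" by auto
    then obtain u w where "C = {u,w}" "u \<noteq> w" by (auto simp: card_2_iff)
    have "is_clique {1..n} E C" using clique_iff \<open>C \<in> SR_complex n Gs\<close> by simp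
    with \<open>C = {u,w}\<close> \<open>u \<noteq> w\<close> have "{u,w} \<in> E" by (auto simp: is_clique_def)
    then show "E \<noteq> {}" by auto
  next
    assume "E \<noteq> {}"
    then obtain e where e: "e \<in> E" by auto
    then have "e \<subseteq> {1..n}" "card e = 2" by (auto simp: compl_tau_edges_def)
    then obtain u w where "e = {u,w}" "u \<noteq> w" by (auto simp: card_2_iff)
    with e \<open>e \<subseteq> {1..n}\<close> have "is_clique {1..n} E e" by (auto simp: is_clique_def insert_commute)
    with \<open>card e = 2\<close> show "2 \<in> card ` SR_complex n Gs" using clique_iff by force
  qed
  ultimately show ?thesis by simp
qed


lemma vdeg_iff: "i \<in> {1..n} \<Longrightarrow> vdegree {1..n} E i < n - 1 \<longleftrightarrow> i \<in> \<Union>Gs"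
proof -
  assume i: "i \<in> {1..n}"
  define S where "S = {u \<in> {1..n}. {i, u} \<in> E}"
  have vd: "vdegree {1..n} E i = card S" unfolding S_def vdegree_def ..
  have sub: "S \<subseteq> {1..n} - {i}"
  proof
    fix u assume "u \<in> S"
    then have "u \<in> {1..n}" "{i,u} \<in> E" unfolding S_def by auto
    then have "card {i,u} = 2" unfolding compl_tau_edges_def by simp
    then have "u \<noteq> i" by (cases "u = i") auto
    then show "u \<in> {1..n} - {i}" using \<open>u \<in> {1..n}\<close> by simp
  qed
  have c: "card ({1..n} - {i}) = n - 1" using i by (simp add: card_Diff_singleton)
  show ?thesis
  proof
    assume "vdegree {1..n} E i < n - 1"
    then have "S \<noteq> {1..n} - {i}" using c vd by auto
    with sub obtain u where u: "u \<in> {1..n} - {i}" "u \<notin> S" by blast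
    then have "{i,u} \<notin> E" unfolding S_def by simp
    moreover have "{i,u} \<subseteq> {1..n}" "card {i,u} = 2" using u i by auto
    ultimately have "{i,u} \<in> Gs" unfolding compl_tau_edges_def by simp
    then show "i \<in> \<Union>Gs" by blast
  next
    assume "i \<in> \<Union>Gs"
    then obtain g where g: "g \<in> Gs" "i \<in> g" by blast
    then obtain a b where ab: "g = {a,b}" "a \<noteq> b" "a \<in> {1..n}" "b \<in> {1..n}" using gen2 by blast
    then obtain u where u: "g = {i,u}" "u \<noteq> i" "u \<in> {1..n}" using g(2) by blast
    then have "{i,u} \<notin> E" using g(1) unfolding compl_tau_edges_def by simp
    then have "u \<notin> S" unfolding S_def by simp
    then have "S \<subset> {1..n} - {i}" using sub u by blast
    then have "card S < card ({1..n} - {i})" by (meson finite_Diff finite_atLeastAtMost psubset_card_mono)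
    then show "vdegree {1..n} E i < n - 1" using c vd by simp
  qed
qed

lemma bip_iff: "E \<noteq> {} \<Longrightarrow> (\<exists>l. of_l_type n Gs l) \<longleftrightarrow> bipartite {1..n} E"
proof
  assume "\<exists>l. of_l_type n Gs l"
  then obtain B where B: "B \<noteq> {}" "B \<subset> {1..n}" "W_set n B \<subseteq> Gs" by (auto simp: of_l_type_def)
  show "bipartite {1..n} E"
    unfolding bipartite_def
  proof (intro exI conjI)
    show "B \<union> ({1..n} - B) = {1..n}" using B by auto
    show "B \<inter> ({1..n} - B) = {}" by auto
    show "\<forall>e\<in>E. \<exists>a\<in>B. \<exists>b\<in>{1..n} - B. e = {a, b}"
    proof
      fix e assume e: "e \<in> E"
      then have "e \<subseteq> {1..n}" "card e = 2" "e \<notin> Gs" by (auto simp: compl_tau_edges_def)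
      then obtain a b where ab: "e = {a,b}" "a \<noteq> b" "a \<in> {1..n}" "b \<in> {1..n}" by (auto simp: card_2_iff)
      have "\<not> (a \<in> B \<and> b \<in> B)"
      proof
        assume "a \<in> B \<and> b \<in> B"
        then have "e \<in> W_set n B" using ab unfolding W_set_def by blast
        with B \<open>e \<notin> Gs\<close> show False by blast
      qed
      moreover have "\<not> (a \<notin> B \<and> b \<notin> B)"
      proof
        assume "a \<notin> B \<and> b \<notin> B"
        then have "e \<in> W_set n B" using ab unfolding W_set_def by blast
        with B \<open>e \<notin> Gs\<close> show False by blast
      qed
      ultimately show "\<exists>a\<in>B. \<exists>b\<in>{1..n} - B. e = {a, b}" using ab by (metis Diff_iff insert_commute)
    qed
  qed
next
  assume ne: "E \<noteq> {}" and "bipartite {1..n} E"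
  then obtain A B where AB: "A \<union> B = {1..n}" "A \<inter> B = {}" "\<forall>e\<in>E. \<exists>a\<in>A. \<exists>b\<in>B. e = {a, b}"
    unfolding bipartite_def by blast
  from ne obtain e where "e \<in> E" by auto
  with AB obtain a b where "a \<in> A" "b \<in> B" by blast
  have Bc: "B = {1..n} - A" using AB by auto
  have "W_set n A \<subseteq> Gs"
  proof
    fix e assume "e \<in> W_set n A"
    then obtain i j where ij: "e = {i,j}" "i \<noteq> j" "(i \<in> A \<and> j \<in> A) \<or> (i \<in> B \<and> j \<in> B)"
      unfolding W_set_def Bc by blast
    have "e \<subseteq> {1..n}" using ij AB by auto
    moreover have "card e = 2" using ij by auto
    moreover have "e \<notin> E"
    proof
      assume "e \<in> E"
      then obtain a' b' where "a' \<in> A" "b' \<in> B" "e = {a',b'}" using AB by blast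
      with ij AB(2) show False by (auto simp: doubleton_eq_iff)
    qed
    ultimately show "e \<in> Gs" by (auto simp: compl_tau_edges_def)
  qed
  moreover have "A \<noteq> {}" "A \<subset> {1..n}" using \<open>a \<in> A\<close> \<open>b \<in> B\<close> AB by auto
  ultimately show "\<exists>l. of_l_type n Gs l" unfolding of_l_type_def by blast
qed

end

theorem lemma4p5:
  fixes n :: nat and Gs :: "nat set set"
  assumes "sqfree_deg2_gens n Gs" and "Gs \<noteq> {}"
  shows "(f_ideal n Gs \<and> (\<forall>l. \<not> of_l_type n Gs l)) \<longleftrightarrow>
     ((\<forall>i\<in>{1..n}. vdegree {1..n} (compl_tau_edges n Gs) i < n - 1)
      \<and> clique_number {1..n} (compl_tau_edges n Gs) = 2
      \<and> real (card (compl_tau_edges n Gs)) = (1/2) * real (n choose 2)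
      \<and> \<not> bipartite {1..n} (compl_tau_edges n Gs))"
proof -
  interpret L n Gs using assms by unfold_locales
  have cGs: "card Gs > 0" using assms(2) fin_gs by (simp add: card_gt_0_iff)
  have cov: "(\<forall>i\<in>{1..n}. vdegree {1..n} E i < n - 1) \<longleftrightarrow> \<Union>Gs = {1..n}"
  proof
    assume A: "\<forall>i\<in>{1..n}. vdegree {1..n} E i < n - 1"
    have "{1..n} \<subseteq> \<Union>Gs"
    proof
      fix i assume "i \<in> {1..n}" then show "i \<in> \<Union>Gs" using A vdeg_iff by blast
    qed
    then show "\<Union>Gs = {1..n}" using gsub by (rule subset_antisym[rotated])
  next
    assume "\<Union>Gs = {1..n}"
    then show "\<forall>i\<in>{1..n}. vdegree {1..n} E i < n - 1" using vdeg_iff by simp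
  qed
  have half: "real (card E) = (1/2) * real (n choose 2) \<longleftrightarrow> card Gs = card E"
  proof -
    have r: "real (card Gs) + real (card E) = real (n choose 2)" using card_sum by (metis of_nat_add)
    show ?thesis using r by linarith
  qed
  show ?thesis
  proof
    assume H: "f_ideal n Gs \<and> (\<forall>l. \<not> of_l_type n Gs l)"
    then have F: "\<Union>Gs = {1..n}" "card Gs = card E" "\<forall>F\<in>SR_complex n Gs. card F \<le> 2"
      using f_ideal_iff by auto
    then have "E \<noteq> {}" using cGs by auto
    moreover have "\<not> bipartite {1..n} E" using bip_iff[OF \<open>E \<noteq> {}\<close>] H by simp
    ultimately show "(\<forall>i\<in>{1..n}. vdegree {1..n} E i < n - 1) \<and> clique_number {1..n} E = 2
      \<and> real (card E) = (1/2) * real (n choose 2) \<and> \<not> bipartite {1..n} E"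
      using F cov half clique_num_iff by simp
  next
    assume H: "(\<forall>i\<in>{1..n}. vdegree {1..n} E i < n - 1) \<and> clique_number {1..n} E = 2
      \<and> real (card E) = (1/2) * real (n choose 2) \<and> \<not> bipartite {1..n} E"
    then have "E \<noteq> {}" "\<forall>F\<in>SR_complex n Gs. card F \<le> 2" using clique_num_iff by auto
    moreover have "\<forall>l. \<not> of_l_type n Gs l" using bip_iff[OF \<open>E \<noteq> {}\<close>] H by simp
    moreover have "f_ideal n Gs" using f_ideal_iff H cov half calculation by simp
    ultimately show "f_ideal n Gs \<and> (\<forall>l. \<not> of_l_type n Gs l)" by simp
  qed
qed

end
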